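(* Let $\mathcal C$ be a closed curve and $P_1,P_2,\dots,P_N$ distinct points on $\mathcal C$ listed in cyclic order around $\mathcal C$, with the convention $P_{N+1}=P_1$ and $P_{N+2}=P_2$. Assume there are positive constants $A_0$ and $R_0$ such that (a) for all $j\in\{1,\dots,N\}$, $\frac{A_0}{2}\le\mathrm{Area}(\triangle P_jP_{j+1}P_{j+2})$; (b) for each $j\in\{1,\dots,N\}$ the points $P_j,P_{j+1},P_{j+2}$ lie on a circle of radius $\ge R_0$. Then $$N<\frac{\mathrm{Length}(\mathcal C)}{(A_0R_0)^{1/3}}.$$ *)

theory Defs
  imports "HOL-Analysis.Analysis"
begin

text \<open>The length of a curve
  g on [0,1] is the supremum (in the extended reals, so non-rectifiable curves
  have length infinity) of the lengths of inscribed polygons.\<close>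

definition curve_length :: "(real \<Rightarrow> complex) \<Rightarrow> ereal" where
  "curve_length g =
     (SUP p \<in> {(t :: nat \<Rightarrow> real, k :: nat). t 0 = 0 \<and> t k = 1 \<and> (\<forall>i<k. t i \<le> t (Suc i))}.
        ereal (\<Sum>i < snd p. dist (g (fst p i)) (g (fst p (Suc i)))))"

definition triangle_area :: "complex \<Rightarrow> complex \<Rightarrow> complex \<Rightarrow> real" where
  "triangle_area a b c =
     \<bar>Re (b - a) * Im (c - a) - Im (b - a) * Re (c - a)\<bar> / 2"

end

theory Submission
  imports Defs
begin

lemma circ_identity:
  fixes a b d c :: complex
  assumes "cmod (a - c) = r" "cmod (b - c) = r" "cmod (d - c) = r" "r \<ge> 0"
  shows "cmod (b - a) * cmod (d - b) * cmod (d - a) =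
     2 * r * \<bar>Re (b - a) * Im (d - a) - Im (b - a) * Re (d - a)\<bar>"
proof -
  define a1 a2 b1 b2 d1 d2 where "a1 = Re (a - c)" "a2 = Im (a - c)" "b1 = Re (b - c)"
    "b2 = Im (b - c)" "d1 = Re (d - c)" "d2 = Im (d - c)"
  have ha: "a1^2 + a2^2 = r^2" using assms(1) unfolding a1_a2_b1_b2_d1_d2_def
    by (metis cmod_power2)
  have hb: "b1^2 + b2^2 = r^2" using assms(2) unfolding a1_a2_b1_b2_d1_d2_def
    by (metis cmod_power2)
  have hd: "d1^2 + d2^2 = r^2" using assms(3) unfolding a1_a2_b1_b2_d1_d2_def
    by (metis cmod_power2)
  have e1: "cmod (b - a) ^ 2 = (b1-a1)^2+(b2-a2)^2"
    unfolding a1_a2_b1_b2_d1_d2_def cmod_power2 by simp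
  have e2: "cmod (d - b) ^ 2 = (d1-b1)^2+(d2-b2)^2"
    unfolding a1_a2_b1_b2_d1_d2_def cmod_power2 by simp
  have e3: "cmod (d - a) ^ 2 = (d1-a1)^2+(d2-a2)^2"
    unfolding a1_a2_b1_b2_d1_d2_def cmod_power2 by simp
  have cr: "Re (b - a) * Im (d - a) - Im (b - a) * Re (d - a) = (b1-a1)*(d2-a2)-(b2-a2)*(d1-a1)"
    unfolding a1_a2_b1_b2_d1_d2_def by simp
  have key: "((b1-a1)^2+(b2-a2)^2)*((d1-b1)^2+(d2-b2)^2)*((d1-a1)^2+(d2-a2)^2)
     = 4*r^2*((b1-a1)*(d2-a2)-(b2-a2)*(d1-a1))^2"
    using ha hb hd by algebra
  have "(cmod (b - a) * cmod (d - b) * cmod (d - a))^2 =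
     (2 * r * \<bar>Re (b - a) * Im (d - a) - Im (b - a) * Re (d - a)\<bar>)^2"
    unfolding power_mult_distrib e1 e2 e3 cr power2_abs using key by simp
  then show ?thesis
    using assms(4) by (simp add: power2_eq_iff_nonneg)
qed

lemma strict_tri:
  fixes a b d :: complex
  assumes "Re (b - a) * Im (d - a) - Im (b - a) * Re (d - a) \<noteq> 0"
  shows "cmod (d - a) < cmod (b - a) + cmod (d - b)"
proof -
  define u1 u2 v1 v2 where "u1 = Re (b - a)" "u2 = Im (b - a)" "v1 = Re (d - b)" "v2 = Im (d - b)"
  have cr: "u1 * v2 - u2 * v1 \<noteq> 0" using assms unfolding u1_u2_v1_v2_def
    by (simp add: algebra_simps)
  have lag: "(u1* v1+u2* v2)^2 + (u1* v2-u2* v1)^2 = (u1^2+u2^2)*(v1^2+v2^2)"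
    by algebra
  have "(u1* v2-u2* v1)^2 > 0" using cr by simp
  hence lt: "(u1* v1+u2* v2)^2 < (u1^2+u2^2)*(v1^2+v2^2)" using lag by linarith
  have nu: "cmod (b - a) = sqrt (u1^2+u2^2)" unfolding u1_u2_v1_v2_def cmod_def by simp
  have nv: "cmod (d - b) = sqrt (v1^2+v2^2)" unfolding u1_u2_v1_v2_def cmod_def by simp
  have "\<bar>u1* v1+u2* v2\<bar> < sqrt ((u1^2+u2^2)*(v1^2+v2^2))"
    using lt by (metis real_sqrt_abs real_sqrt_less_mono)
  hence dot: "u1* v1+u2* v2 < cmod (b - a) * cmod (d - b)"
    unfolding nu nv real_sqrt_mult by linarith
  have e3: "cmod (d - a) ^ 2 = (u1+v1)^2 + (u2+v2)^2"
    unfolding u1_u2_v1_v2_def cmod_power2 by simp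
  have e1: "cmod (b - a)^2 = u1^2+u2^2" unfolding u1_u2_v1_v2_def cmod_power2 by simp
  have e2: "cmod (d - b)^2 = v1^2+v2^2" unfolding u1_u2_v1_v2_def cmod_power2 by simp
  have "cmod (d - a) ^ 2 < (cmod (b - a) + cmod (d - b))^2"
    unfolding e3 power2_sum[of "cmod (b - a)"] e1 e2 using dot
    by (simp add: power2_sum algebra_simps)
  then show ?thesis by (rule power_less_imp_less_base) simp
qed

lemma cube_step:
  fixes x y z K :: real
  assumes "x \<ge> 0" "y \<ge> 0" "z < x + y" "x * y * z \<ge> 2 * K" "K > 0"
  shows "(x + y)^3 > 8 * K"
proof -
  have "x * y > 0"
  proof (rule ccontr)
    assume "\<not> x * y > 0"
    moreover have "x * y \<ge> 0" using assms by simp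
    ultimately have "x * y = 0" by linarith
    hence "x * y * z = 0" by simp
    thus False using assms by linarith
  qed
  hence "x * y * z < x * y * (x + y)" using mult_strict_left_mono[OF assms(3)] by blast
  moreover have "(x+y)^3 - 4 * (x * y * (x + y)) = (x+y)*(x-y)^2" by algebra
  moreover have "(x+y)*(x-y)^2 \<ge> 0" using assms by simp
  ultimately show ?thesis using assms(4) by linarith
qed

theorem theorem3p2:
  fixes g :: "real \<Rightarrow> complex" and N :: nat and s :: "nat \<Rightarrow> real"
    and P :: "nat \<Rightarrow> complex" and A0 R0 :: real
  assumes closed_curve: "path g" "pathfinish g = pathstart g"
    and N3: "N \<ge> 3"
    and order: "0 \<le> s 1" "s N < 1" "\<And>j. 1 \<le> j \<Longrightarrow> j < N \<Longrightarrow> s j < s (Suc j)"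
    and on_curve: "\<And>j. 1 \<le> j \<Longrightarrow> j \<le> N \<Longrightarrow> P j = g (s j)"
    and wrap: "P (N + 1) = P 1" "P (N + 2) = P 2"
    and distinct: "inj_on P {1..N}"
    and pos: "A0 > 0" "R0 > 0"
    and area: "\<And>j. 1 \<le> j \<Longrightarrow> j \<le> N \<Longrightarrow> A0 / 2 \<le> triangle_area (P j) (P (j + 1)) (P (j + 2))"
    and circle: "\<And>j. 1 \<le> j \<Longrightarrow> j \<le> N \<Longrightarrow>
        \<exists>c r. r \<ge> R0 \<and> cmod (P j - c) = r \<and> cmod (P (j + 1) - c) = r \<and> cmod (P (j + 2) - c) = r"
  shows "ereal (real N) < curve_length g / ereal ((A0 * R0) powr (1 / 3))"
proof -
  define K where "K = A0 * R0"
  define k where "k = K powr (1/3)"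
  have K0: "K > 0" using pos unfolding K_def by simp
  have k0: "k > 0" using K0 unfolding k_def by simp
  have k3: "k ^ 3 = K" unfolding k_def using K0
    by (simp add: powr_realpow[symmetric] powr_powr)
  define d where "d j = cmod (P (j + 1) - P j)" for j
  have step: "d j + d (j + 1) > 2 * k" if j: "1 \<le> j" "j \<le> N" for j
  proof -
    obtain c r where cr: "r \<ge> R0" "cmod (P j - c) = r" "cmod (P (j + 1) - c) = r"
      "cmod (P (j + 2) - c) = r" using circle[OF j] by blast
    let ?X = "Re (P (j+1) - P j) * Im (P (j+2) - P j) - Im (P (j+1) - P j) * Re (P (j+2) - P j)"
    have ar: "A0 \<le> \<bar>?X\<bar>" using area[OF j] unfolding triangle_area_def by simp
    have id: "cmod (P (j+1) - P j) * cmod (P (j+2) - P (j+1)) * cmod (P (j+2) - P j) = 2 * r * \<bar>?X\<bar>"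
      by (rule circ_identity[OF cr(2,3,4)]) (use cr pos in linarith)
    have "r * \<bar>?X\<bar> \<ge> R0 * A0" using cr(1) ar pos by (intro mult_mono) auto
    hence prod: "d j * d (j+1) * cmod (P (j+2) - P j) \<ge> 2 * K"
      using id unfolding d_def K_def by (simp add: add.assoc numeral_2_eq_2 algebra_simps)
    have Xn: "?X \<noteq> 0" using ar pos by auto
    have tri: "cmod (P (j+2) - P j) < d j + d (j+1)"
      using strict_tri[OF Xn] unfolding d_def by (simp add: numeral_2_eq_2)
    have "(d j + d (j+1))^3 > 8 * K"
      by (rule cube_step[OF _ _ tri prod K0]) (auto simp: d_def)
    hence "(2 * k)^3 < (d j + d (j+1))^3" using k3 by simp
    thus ?thesis by (rule power_less_imp_less_base) (auto simp: d_def)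
  qed
  have "(\<Sum>j=1..N. 2 * k) < (\<Sum>j=1..N. d j + d (j + 1))"
  proof (rule sum_strict_mono)
    fix j assume "j \<in> {1..N}"
    then show "2 * k < d j + d (j + 1)" using step by simp
  qed (use N3 in auto)
  also have "(\<Sum>j=1..N. d j + d (j + 1)) = 2 * (\<Sum>j=1..N. d j)"
  proof -
    have dN: "d (N + 1) = d 1" unfolding d_def using wrap by (simp add: numeral_2_eq_2)
    have "(\<Sum>j=1..N. d (j + 1)) = (\<Sum>j=2..N+1. d j)"
      by (rule sum.reindex_bij_witness[of _ "\<lambda>j. j - 1" "\<lambda>j. j + 1"]) auto
    also have "\<dots> = (\<Sum>j=2..N. d j) + d 1" using N3 dN by simp
    also have "\<dots> = (\<Sum>j=1..N. d j)" using N3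
      by (simp add: sum.atLeast_Suc_atMost numeral_2_eq_2)
    finally show ?thesis by (simp add: sum.distrib)
  qed
  finally have L: "real N * k < (\<Sum>j=1..N. d j)" by simp
  define t where "t i = (if i = 0 then 0 else if i \<le> N then s i else 1)" for i
  have tmono: "\<forall>i<N+1. t i \<le> t (Suc i)"
  proof (intro allI impI)
    fix i assume "i < N + 1"
    then consider "i = 0" | "1 \<le> i" "i < N" | "i = N" by linarith
    thus "t i \<le> t (Suc i)"
    proof cases
      case 1 thus ?thesis using order N3 by (simp add: t_def)
    next
      case 2 thus ?thesis using order(3)[of i] by (simp add: t_def)
    next
      case 3 thus ?thesis using order N3 by (simp add: t_def)
    qed
  qed
  have mem: "(t, N + 1) \<in> {(t :: nat \<Rightarrow> real, k :: nat). t 0 = 0 \<and> t k = 1 \<and> (\<forall>i<k. t i \<le> t (Suc i))}"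
    using tmono by (simp add: t_def)
  have le: "ereal (\<Sum>i < N + 1. dist (g (t i)) (g (t (Suc i)))) \<le> curve_length g"
    unfolding curve_length_def using mem by (rule SUP_upper2) simp
  have g01: "g 1 = g 0" using closed_curve(2) by (simp add: pathfinish_def pathstart_def)
  have "(\<Sum>i < N + 1. dist (g (t i)) (g (t (Suc i)))) =
        dist (g 0) (P 1) + (\<Sum>i=1..<N. d i) + dist (P N) (g 1)"
  proof -
    have "(\<Sum>i < N + 1. dist (g (t i)) (g (t (Suc i)))) =
        (\<Sum>i < N. dist (g (t i)) (g (t (Suc i)))) + dist (g (t N)) (g (t (Suc N)))" by simp
    also have "(\<Sum>i < N. dist (g (t i)) (g (t (Suc i)))) =
        dist (g (t 0)) (g (t 1)) + (\<Sum>i=1..<N. dist (g (t i)) (g (t (Suc i))))"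
      using N3 by (simp add: lessThan_atLeast0 sum.atLeast_Suc_lessThan)
    also have "(\<Sum>i=1..<N. dist (g (t i)) (g (t (Suc i)))) = (\<Sum>i=1..<N. d i)"
      by (rule sum.cong) (auto simp: t_def d_def on_curve dist_norm norm_minus_commute)
    finally show ?thesis using N3 by (simp add: t_def on_curve)
  qed
  moreover have "(\<Sum>j=1..N. d j) = (\<Sum>i=1..<N. d i) + d N"
    using N3 by (simp add: sum.last_plus)
  moreover have "d N \<le> dist (g 0) (P 1) + dist (P N) (g 1)"
  proof -
    have "d N = dist (P N) (P 1)" unfolding d_def using wrap by (simp add: dist_norm norm_minus_commute)
    also have "\<dots> \<le> dist (P N) (g 1) + dist (g 1) (P 1)" by (rule dist_triangle)
    finally show ?thesis using g01 by simp
  qed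
  ultimately have "(\<Sum>j=1..N. d j) \<le> (\<Sum>i < N + 1. dist (g (t i)) (g (t (Suc i))))" by linarith
  with L have "ereal (real N * k) < ereal (\<Sum>i < N + 1. dist (g (t i)) (g (t (Suc i))))"
    by simp
  hence "ereal (real N * k) < curve_length g" using le by (rule less_le_trans)
  hence "ereal (real N) < curve_length g / ereal k"
  proof (cases "curve_length g")
    case (real x)
    thus ?thesis using \<open>ereal (real N * k) < curve_length g\<close> k0
      by (simp add: pos_less_divide_eq)
  qed (use k0 in auto)
  thus ?thesis unfolding k_def K_def .
qed

end
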